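(* Let $\mathbf{A}$ be a real $n\times n$ matrix that is TJS (respectively, STJS). Let $P$ be a permutation of $[n]$ and $\mathbf{P}$ the corresponding permutation matrix. Then $\mathbf{P}\mathbf{A}\mathbf{P}^{-1}$ (obtained from $\mathbf{A}$ by renumbering both rows and columns according to $P$) is TJS (respectively, STJS). In particular, the matrix obtained from $\mathbf{A}$ by reversing the order of both its rows and its columns is TJS (respectively, STJS).
   Context: For $J\subseteq[m]$, $J^c=[m]\setminus J$, an $m\times m$ matrix $(a_{ik})$ is $J$-sign-symmetric if $a_{ik}\ge0$ on $(J\times J)\cup(J^c\times J^c)$ and $a_{ik}\le0$ on $(J\times J^c)\cup(J^c\times J)$; strictly $J$-sign-symmetric if strictly. $\mathbf{A}^{(j)}$ is the $j$th compound matrix (all $j\times j$ minors, index sets in lexicographic order). $\mathbf{A}$ is TJS (resp. STJS) if $\mathbf{A}$ is (strictly) $J$-sign-symmetric for some $J\subseteq[n]$ and every $\mathbf{A}^{(j)}$, $j=2,\ldots,n$, is (strictly) $J_j$-sign-symmetric for some subset $J_j$ of its index set. *)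

theory Defs
  imports "Jordan_Normal_Form.Determinant" "HOL-Combinatorics.Permutations"
begin

text \<open>Matrices are Jordan_Normal_Form matrices; indices are 0-based, so [n] is {..<n}.\<close>

definition sign_symm :: "'i set \<Rightarrow> 'i set \<Rightarrow> ('i \<Rightarrow> 'i \<Rightarrow> real) \<Rightarrow> bool" where
  "sign_symm I J M \<longleftrightarrow> J \<subseteq> I \<and>
     (\<forall>i\<in>I. \<forall>k\<in>I. ((i \<in> J) = (k \<in> J) \<longrightarrow> M i k \<ge> 0) \<and>
                    ((i \<in> J) \<noteq> (k \<in> J) \<longrightarrow> M i k \<le> 0))"

definition strict_sign_symm :: "'i set \<Rightarrow> 'i set \<Rightarrow> ('i \<Rightarrow> 'i \<Rightarrow> real) \<Rightarrow> bool" where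
  "strict_sign_symm I J M \<longleftrightarrow> J \<subseteq> I \<and>
     (\<forall>i\<in>I. \<forall>k\<in>I. ((i \<in> J) = (k \<in> J) \<longrightarrow> M i k > 0) \<and>
                    ((i \<in> J) \<noteq> (k \<in> J) \<longrightarrow> M i k < 0))"

definition minor :: "real mat \<Rightarrow> nat set \<Rightarrow> nat set \<Rightarrow> real" where
  "minor A \<alpha> \<beta> = det (mat (card \<alpha>) (card \<beta>)
      (\<lambda>(i,k). A $$ (sorted_list_of_set \<alpha> ! i, sorted_list_of_set \<beta> ! k)))"

text \<open>Rows/columns of the compound matrix are labelled by these subsets (the lexicographic
  numbering is a bijective relabelling, irrelevant for sign-symmetry).\<close>
definition compound_idx :: "nat \<Rightarrow> nat \<Rightarrow> nat set set" where
  "compound_idx n j = {\<alpha>. \<alpha> \<subseteq> {..<n} \<and> card \<alpha> = j}"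

definition compound :: "real mat \<Rightarrow> nat set \<Rightarrow> nat set \<Rightarrow> real" where
  "compound A \<alpha> \<beta> = minor A \<alpha> \<beta>"

definition TJS :: "nat \<Rightarrow> real mat \<Rightarrow> bool" where
  "TJS n A \<longleftrightarrow> A \<in> carrier_mat n n \<and>
     (\<exists>J. sign_symm {..<n} J (\<lambda>i k. A $$ (i,k))) \<and>
     (\<forall>j\<in>{2..n}. \<exists>Jj. sign_symm (compound_idx n j) Jj (compound A))"

definition STJS :: "nat \<Rightarrow> real mat \<Rightarrow> bool" where
  "STJS n A \<longleftrightarrow> A \<in> carrier_mat n n \<and>
     (\<exists>J. strict_sign_symm {..<n} J (\<lambda>i k. A $$ (i,k))) \<and>
     (\<forall>j\<in>{2..n}. \<exists>Jj. strict_sign_symm (compound_idx n j) Jj (compound A))"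

definition perm_mat :: "nat \<Rightarrow> (nat \<Rightarrow> nat) \<Rightarrow> real mat" where
  "perm_mat n p = mat n n (\<lambda>(i,j). if i = p j then 1 else 0)"

definition rev_mat :: "nat \<Rightarrow> real mat \<Rightarrow> real mat" where
  "rev_mat n A = mat n n (\<lambda>(i,k). A $$ (n - 1 - i, n - 1 - k))"

end

theory Submission
  imports Defs
begin

lemma perm_mat_left:
  assumes p: "p permutes {..<n}" and X: "X \<in> carrier_mat n m" and i: "i < n" and k: "k < m"
  shows "(perm_mat n p * X) $$ (i,k) = X $$ (Hilbert_Choice.inv p i, k)"
proof -
  have "(perm_mat n p * X) $$ (i,k) = (\<Sum>j\<in>{0..<n}. (if i = p j then 1 else 0) * X $$ (j,k))"
    using X i k by (simp add: perm_mat_def scalar_prod_def row_def col_def)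
  also have "\<dots> = (\<Sum>j\<in>{0..<n}. if j = Hilbert_Choice.inv p i then X $$ (j,k) else 0)"
  proof (rule sum.cong)
    fix j assume "j \<in> {0..<n}"
    show "(if i = p j then 1 else 0) * X $$ (j,k) = (if j = Hilbert_Choice.inv p i then X $$ (j,k) else 0)"
      using p by (auto simp: permutes_inverses(2) permutes_inverses(1))
  qed simp
  also have "\<dots> = X $$ (Hilbert_Choice.inv p i, k)"
    using p i by (simp add: permutes_in_image permutes_inv lessThan_atLeast0[symmetric])
  finally show ?thesis .
qed

lemma perm_mat_right:
  assumes p: "p permutes {..<n}" and X: "X \<in> carrier_mat m n" and i: "i < m" and k: "k < n"
  shows "(X * perm_mat n p) $$ (i,k) = X $$ (i, p k)"
proof -
  have "(X * perm_mat n p) $$ (i,k) = (\<Sum>j\<in>{0..<n}. X $$ (i,j) * (if j = p k then 1 else 0))"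
    using X i k by (simp add: perm_mat_def scalar_prod_def row_def col_def)
  also have "\<dots> = (\<Sum>j\<in>{0..<n}. if j = p k then X $$ (i,j) else 0)"
    by (rule sum.cong) auto
  also have "\<dots> = X $$ (i, p k)"
    using p k by (simp add: permutes_in_image lessThan_atLeast0[symmetric])
  finally show ?thesis .
qed

lemma det_perm_both:
  assumes X: "X \<in> carrier_mat n n" and f: "f permutes {0..<n}" and g: "g permutes {0..<n}"
  shows "det (mat n n (\<lambda>(i,k). X $$ (f i, g k))) = signof f * signof g * det X"
proof -
  define X' where "X' = mat n n (\<lambda>(i,k). X $$ (i, g k))"
  have X': "X' \<in> carrier_mat n n" unfolding X'_def by simp
  have "mat n n (\<lambda>(i,k). X $$ (f i, g k)) = mat n n (\<lambda>(i,k). X' $$ (f i, k))"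
    by (rule cong_mat, insert f, auto simp: X'_def permutes_in_image)
  hence 1: "det (mat n n (\<lambda>(i,k). X $$ (f i, g k))) = signof f * det X'"
    using det_permute_rows[OF X' f] by simp
  have "transpose_mat X' = mat n n (\<lambda>(i,k). transpose_mat X $$ (g i, k))"
    by (rule eq_matI, insert g X, auto simp: X'_def permutes_in_image)
  hence "det X' = signof g * det X"
    using det_transpose[OF X'] det_permute_rows[of "transpose_mat X" n g] det_transpose[OF X] g X
    by auto
  with 1 show ?thesis by simp
qed

definition pm :: "nat \<Rightarrow> (nat \<Rightarrow> nat) \<Rightarrow> real mat \<Rightarrow> real mat" where
  "pm n q A = mat n n (\<lambda>(i,k). A $$ (q i, q k))"

definition epsf :: "(nat \<Rightarrow> nat) \<Rightarrow> nat set \<Rightarrow> nat \<Rightarrow> nat" where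
  "epsf q a = (SOME f. f permutes {..<card a} \<and>
      permute_list f (sorted_list_of_set (q ` a)) = map q (sorted_list_of_set a))"

definition eps :: "(nat \<Rightarrow> nat) \<Rightarrow> nat set \<Rightarrow> real" where
  "eps q a = signof (epsf q a)"

lemma eps_cases: "eps q a = 1 \<or> eps q a = -1"
  by (simp add: eps_def sign_def)

lemma epsf_prop:
  assumes q: "inj_on q {..<n}" and a: "a \<subseteq> {..<n}"
  shows "epsf q a permutes {..<card a} \<and>
      (\<forall>i<card a. q (sorted_list_of_set a ! i) = sorted_list_of_set (q ` a) ! epsf q a i)"
proof -
  have fa: "finite a" using a finite_subset by blast
  have inja: "inj_on q a" using q a inj_on_subset by blast
  have c: "card (q ` a) = card a" using card_image[OF inja] .
  have "mset (map q (sorted_list_of_set a)) = mset (sorted_list_of_set (q ` a))"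
  proof -
    have d1: "distinct (map q (sorted_list_of_set a))"
      using inja fa by (simp add: distinct_map)
    have d2: "distinct (sorted_list_of_set (q ` a))" by simp
    have "set (map q (sorted_list_of_set a)) = set (sorted_list_of_set (q ` a))"
      using fa by simp
    thus ?thesis using set_eq_iff_mset_eq_distinct[OF d1 d2] by blast
  qed
  then obtain f where f: "f permutes {..<length (sorted_list_of_set (q ` a))}"
    "permute_list f (sorted_list_of_set (q ` a)) = map q (sorted_list_of_set a)"
    by (rule mset_eq_permutation)
  hence "\<exists>f. f permutes {..<card a} \<and>
      permute_list f (sorted_list_of_set (q ` a)) = map q (sorted_list_of_set a)"
    using c by auto
  hence e: "epsf q a permutes {..<card a} \<and>
      permute_list (epsf q a) (sorted_list_of_set (q ` a)) = map q (sorted_list_of_set a)"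
    unfolding epsf_def by (rule someI_ex)
  show ?thesis
  proof (intro conjI allI impI)
    show "epsf q a permutes {..<card a}" using e by simp
    fix i assume i: "i < card a"
    have "q (sorted_list_of_set a ! i) = map q (sorted_list_of_set a) ! i"
      using i by simp
    also have "\<dots> = permute_list (epsf q a) (sorted_list_of_set (q ` a)) ! i" using e by simp
    also have "\<dots> = sorted_list_of_set (q ` a) ! epsf q a i"
      using i c e by (subst permute_list_nth) auto
    finally show "q (sorted_list_of_set a ! i) = sorted_list_of_set (q ` a) ! epsf q a i" .
  qed
qed

lemma minor_pm:
  assumes q: "bij_betw q {..<n} {..<n}" and a: "a \<subseteq> {..<n}" and b: "b \<subseteq> {..<n}"
    and ab: "card a = card b"
  shows "minor (pm n q A) a b = eps q a * eps q b * minor A (q ` a) (q ` b)"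
proof -
  have qi: "inj_on q {..<n}" using bij_betw_imp_inj_on[OF q] .
  note ea = epsf_prop[OF qi a] and eb = epsf_prop[OF qi b]
  have ca: "card (q ` a) = card a" using card_image inj_on_subset[OF qi a] by blast
  have cb: "card (q ` b) = card b" using card_image inj_on_subset[OF qi b] by blast
  have fa: "finite a" using a finite_subset by blast
  have fb: "finite b" using b finite_subset by blast
  define j where "j = card a"
  define X where "X = mat j j (\<lambda>(i,k). A $$ (sorted_list_of_set (q ` a) ! i, sorted_list_of_set (q ` b) ! k))"
  have sa: "\<And>i. i < j \<Longrightarrow> sorted_list_of_set a ! i < n"
  proof -
    fix i assume "i < j"
    hence "sorted_list_of_set a ! i \<in> set (sorted_list_of_set a)" using fa j_def by (simp del: set_sorted_list_of_set)
    thus "sorted_list_of_set a ! i < n" using fa a by auto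
  qed
  have sb: "\<And>i. i < j \<Longrightarrow> sorted_list_of_set b ! i < n"
  proof -
    fix i assume "i < j"
    hence "sorted_list_of_set b ! i \<in> set (sorted_list_of_set b)" using fb j_def ab by (simp del: set_sorted_list_of_set)
    thus "sorted_list_of_set b ! i < n" using fb b by auto
  qed
  have "minor (pm n q A) a b = det (mat j j (\<lambda>(i,k). X $$ (epsf q a i, epsf q b k)))"
    unfolding minor_def
  proof (rule arg_cong[where f = det], rule cong_mat)
    fix i k assume i: "i < card a" and k: "k < card b"
    have fi: "epsf q a i < j" using ea i permutes_in_image j_def by fastforce
    have fk: "epsf q b k < j" using eb k permutes_in_image j_def ab by fastforce
    show "(\<lambda>(i,k). pm n q A $$ (sorted_list_of_set a ! i, sorted_list_of_set b ! k)) (i,k) =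
          (\<lambda>(i,k). X $$ (epsf q a i, epsf q b k)) (i,k)"
      using sa[of i] sb[of k] i k fi fk ea eb ab unfolding X_def pm_def j_def by auto
  qed (auto simp: j_def ab)
  also have "\<dots> = eps q a * eps q b * det X"
    unfolding eps_def
    by (rule det_perm_both, insert ea eb, auto simp: X_def j_def ab lessThan_atLeast0)
  also have "det X = minor A (q ` a) (q ` b)"
    unfolding minor_def X_def j_def using ca cb ab by simp
  finally show ?thesis .
qed

lemma image_idx:
  assumes q: "bij_betw q {..<n} {..<n}" and a: "a \<in> compound_idx n j"
  shows "q ` a \<in> compound_idx n j"
proof -
  have qi: "inj_on q {..<n}" using bij_betw_imp_inj_on[OF q] .
  have "a \<subseteq> {..<n}" "card a = j" using a by (auto simp: compound_idx_def)
  moreover have "q ` {..<n} = {..<n}" using bij_betw_imp_surj_on[OF q] .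
  ultimately have "q ` a \<subseteq> {..<n}" "card (q ` a) = j"
    using card_image[OF inj_on_subset[OF qi \<open>a \<subseteq> {..<n}\<close>]] by (blast, simp)
  thus ?thesis unfolding compound_idx_def by blast
qed

lemma sign_aux1: "(e = 1 \<or> e = -1) \<Longrightarrow> (f = 1 \<or> f = -1) \<Longrightarrow> (P = Q \<Longrightarrow> c \<ge> 0) \<Longrightarrow> (P \<noteq> Q \<Longrightarrow> c \<le> 0)
  \<Longrightarrow> ((P = (e=1)) = (Q = (f=1))) \<Longrightarrow> e*f*c \<ge> (0::real)"
  by (cases P; cases Q; elim disjE; simp)
lemma sign_aux2: "(e = 1 \<or> e = -1) \<Longrightarrow> (f = 1 \<or> f = -1) \<Longrightarrow> (P = Q \<Longrightarrow> c \<ge> 0) \<Longrightarrow> (P \<noteq> Q \<Longrightarrow> c \<le> 0)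
  \<Longrightarrow> ((P = (e=1)) \<noteq> (Q = (f=1))) \<Longrightarrow> e*f*c \<le> (0::real)"
  by (cases P; cases Q; elim disjE; simp)
lemma sign_aux3: "(e = 1 \<or> e = -1) \<Longrightarrow> (f = 1 \<or> f = -1) \<Longrightarrow> (P = Q \<Longrightarrow> c > 0) \<Longrightarrow> (P \<noteq> Q \<Longrightarrow> c < 0)
  \<Longrightarrow> ((P = (e=1)) = (Q = (f=1))) \<Longrightarrow> e*f*c > (0::real)"
  by (cases P; cases Q; elim disjE; simp)
lemma sign_aux4: "(e = 1 \<or> e = -1) \<Longrightarrow> (f = 1 \<or> f = -1) \<Longrightarrow> (P = Q \<Longrightarrow> c > 0) \<Longrightarrow> (P \<noteq> Q \<Longrightarrow> c < 0)
  \<Longrightarrow> ((P = (e=1)) \<noteq> (Q = (f=1))) \<Longrightarrow> e*f*c < (0::real)"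
  by (cases P; cases Q; elim disjE; simp)

lemma ss_transfer:
  assumes q: "bij_betw q {..<n} {..<n}" and ss: "sign_symm (compound_idx n j) Jj (compound A)"
  shows "sign_symm (compound_idx n j) {a\<in>compound_idx n j. (q ` a \<in> Jj) = (eps q a = 1)}
            (compound (pm n q A))"
  unfolding sign_symm_def
proof (intro conjI ballI impI)
  fix a b assume a: "a \<in> compound_idx n j" and b: "b \<in> compound_idx n j"
  have m: "compound (pm n q A) a b = eps q a * eps q b * compound A (q ` a) (q ` b)"
    unfolding compound_def
    by (rule minor_pm[OF q], insert a b, auto simp: compound_idx_def)
  have qa: "q ` a \<in> compound_idx n j" and qb: "q ` b \<in> compound_idx n j"
    using image_idx[OF q] a b by auto
  have c1: "(q ` a \<in> Jj) = (q ` b \<in> Jj) \<Longrightarrow> compound A (q ` a) (q ` b) \<ge> 0"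
    and c2: "(q ` a \<in> Jj) \<noteq> (q ` b \<in> Jj) \<Longrightarrow> compound A (q ` a) (q ` b) \<le> 0"
    using ss qa qb unfolding sign_symm_def by blast+
  note ea = eps_cases[of q a] and eb = eps_cases[of q b]
  {
    assume "(a \<in> {a\<in>compound_idx n j. (q ` a \<in> Jj) = (eps q a = 1)}) =
      (b \<in> {a\<in>compound_idx n j. (q ` a \<in> Jj) = (eps q a = 1)})"
    then show "compound (pm n q A) a b \<ge> 0"
      unfolding m using a b by (intro sign_aux1[OF ea eb c1 c2]) auto
  next
    assume "(a \<in> {a\<in>compound_idx n j. (q ` a \<in> Jj) = (eps q a = 1)}) \<noteq>
      (b \<in> {a\<in>compound_idx n j. (q ` a \<in> Jj) = (eps q a = 1)})"
    then show "compound (pm n q A) a b \<le> 0"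
      unfolding m using a b by (intro sign_aux2[OF ea eb c1 c2]) auto
  }
qed auto

lemma sss_transfer:
  assumes q: "bij_betw q {..<n} {..<n}" and ss: "strict_sign_symm (compound_idx n j) Jj (compound A)"
  shows "strict_sign_symm (compound_idx n j) {a\<in>compound_idx n j. (q ` a \<in> Jj) = (eps q a = 1)}
            (compound (pm n q A))"
  unfolding strict_sign_symm_def
proof (intro conjI ballI impI)
  fix a b assume a: "a \<in> compound_idx n j" and b: "b \<in> compound_idx n j"
  have m: "compound (pm n q A) a b = eps q a * eps q b * compound A (q ` a) (q ` b)"
    unfolding compound_def
    by (rule minor_pm[OF q], insert a b, auto simp: compound_idx_def)
  have qa: "q ` a \<in> compound_idx n j" and qb: "q ` b \<in> compound_idx n j"
    using image_idx[OF q] a b by auto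
  have c1: "(q ` a \<in> Jj) = (q ` b \<in> Jj) \<Longrightarrow> compound A (q ` a) (q ` b) > 0"
    and c2: "(q ` a \<in> Jj) \<noteq> (q ` b \<in> Jj) \<Longrightarrow> compound A (q ` a) (q ` b) < 0"
    using ss qa qb unfolding strict_sign_symm_def by blast+
  note ea = eps_cases[of q a] and eb = eps_cases[of q b]
  {
    assume "(a \<in> {a\<in>compound_idx n j. (q ` a \<in> Jj) = (eps q a = 1)}) =
      (b \<in> {a\<in>compound_idx n j. (q ` a \<in> Jj) = (eps q a = 1)})"
    then show "compound (pm n q A) a b > 0"
      unfolding m using a b by (intro sign_aux3[OF ea eb c1 c2]) auto
  next
    assume "(a \<in> {a\<in>compound_idx n j. (q ` a \<in> Jj) = (eps q a = 1)}) \<noteq>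
      (b \<in> {a\<in>compound_idx n j. (q ` a \<in> Jj) = (eps q a = 1)})"
    then show "compound (pm n q A) a b < 0"
      unfolding m using a b by (intro sign_aux4[OF ea eb c1 c2]) auto
  }
qed auto

lemma TJS_pm:
  assumes q: "bij_betw q {..<n} {..<n}" and T: "TJS n A"
  shows "TJS n (pm n q A)"
proof -
  have qn: "\<And>i. i < n \<Longrightarrow> q i < n" using q bij_betwE by blast
  from T obtain J where J: "sign_symm {..<n} J (\<lambda>i k. A $$ (i,k))" unfolding TJS_def by blast
  have "sign_symm {..<n} {i. i < n \<and> q i \<in> J} (\<lambda>i k. pm n q A $$ (i,k))"
    using J qn unfolding sign_symm_def pm_def by auto
  moreover have "\<forall>j\<in>{2..n}. \<exists>Jj. sign_symm (compound_idx n j) Jj (compound (pm n q A))"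
    using T ss_transfer[OF q] unfolding TJS_def by blast
  ultimately show ?thesis unfolding TJS_def pm_def by auto
qed

lemma STJS_pm:
  assumes q: "bij_betw q {..<n} {..<n}" and T: "STJS n A"
  shows "STJS n (pm n q A)"
proof -
  have qn: "\<And>i. i < n \<Longrightarrow> q i < n" using q bij_betwE by blast
  from T obtain J where J: "strict_sign_symm {..<n} J (\<lambda>i k. A $$ (i,k))" unfolding STJS_def by blast
  have "strict_sign_symm {..<n} {i. i < n \<and> q i \<in> J} (\<lambda>i k. pm n q A $$ (i,k))"
    using J qn unfolding strict_sign_symm_def pm_def by auto
  moreover have "\<forall>j\<in>{2..n}. \<exists>Jj. strict_sign_symm (compound_idx n j) Jj (compound (pm n q A))"
    using T sss_transfer[OF q] unfolding STJS_def by blast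
  ultimately show ?thesis unfolding STJS_def pm_def by auto
qed


lemma rev_bij: "bij_betw (\<lambda>i. n - 1 - i) {..<n} {..<(n::nat)}"
proof (rule bij_betw_byWitness[where f' = "\<lambda>i. n - 1 - i"])
  show "\<forall>a\<in>{..<n}. n - 1 - (n - 1 - a) = a"
  proof
    fix a assume "a \<in> {..<n}" hence "a \<le> n - 1" by auto
    thus "n - 1 - (n - 1 - a) = a" by simp
  qed
  show "\<forall>a\<in>{..<n}. n - 1 - (n - 1 - a) = a"
  proof
    fix a assume "a \<in> {..<n}" hence "a \<le> n - 1" by auto
    thus "n - 1 - (n - 1 - a) = a" by simp
  qed
  show "(\<lambda>i. n - 1 - i) ` {..<n} \<subseteq> {..<n}" by (auto simp: image_def)
  show "(\<lambda>i. n - 1 - i) ` {..<n} \<subseteq> {..<n}" by (auto simp: image_def)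
qed

lemma rev_pm: "rev_mat n A = pm n (\<lambda>i. n - 1 - i) A"
  unfolding rev_mat_def pm_def by simp

lemma conj_pm:
  assumes A: "A \<in> carrier_mat n n" and p: "p permutes {..<n}"
    and Q: "Q \<in> carrier_mat n n" and PQ: "perm_mat n p * Q = 1\<^sub>m n"
  shows "perm_mat n p * A * Q = pm n (Hilbert_Choice.inv p) A"
proof -
  let ?P = "perm_mat n p" and ?I = "perm_mat n (Hilbert_Choice.inv p)"
  have ip: "Hilbert_Choice.inv p permutes {..<n}" using permutes_inv[OF p] .
  have iip: "Hilbert_Choice.inv (Hilbert_Choice.inv p) = p" using inv_inv_eq[OF permutes_bij[OF p]] .
  have Pc: "?P \<in> carrier_mat n n" and Ic: "?I \<in> carrier_mat n n" by (auto simp: perm_mat_def)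
  have IP: "?I * ?P = 1\<^sub>m n"
  proof (rule eq_matI)
    fix i k assume i: "i < dim_row (1\<^sub>m n)" and k: "k < dim_col (1\<^sub>m n)"
    have "(?I * ?P) $$ (i,k) = ?P $$ (p i, k)"
      using perm_mat_left[OF ip Pc, of i k] i k iip by simp
    also have "\<dots> = (if i = k then 1 else 0)"
      using i k p permutes_in_image[OF p] permutes_inj[OF p] by (auto simp: perm_mat_def inj_eq)
    finally show "(?I * ?P) $$ (i,k) = 1\<^sub>m n $$ (i,k)" using i k by simp
  qed (use Ic Pc in auto)
  have "Q = (?I * ?P) * Q" using IP Q by simp
  also have "\<dots> = ?I * (?P * Q)" using assoc_mult_mat[OF Ic Pc Q] .
  also have "\<dots> = ?I" using PQ Ic by simp
  finally have QI: "Q = ?I" .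
  have PA: "?P * A \<in> carrier_mat n n" using Pc A by simp
  show ?thesis unfolding QI
  proof (rule eq_matI)
    fix i k assume i: "i < dim_row (pm n (Hilbert_Choice.inv p) A)" and k: "k < dim_col (pm n (Hilbert_Choice.inv p) A)"
    hence i: "i < n" and k: "k < n" by (auto simp: pm_def)
    have ik: "Hilbert_Choice.inv p k < n" using permutes_in_image[OF ip] k by auto
    have "(?P * A * ?I) $$ (i,k) = (?P * A) $$ (i, Hilbert_Choice.inv p k)"
      using perm_mat_right[OF ip PA i k] .
    also have "\<dots> = A $$ (Hilbert_Choice.inv p i, Hilbert_Choice.inv p k)"
      using perm_mat_left[OF p A i ik] .
    finally show "(?P * A * ?I) $$ (i,k) = pm n (Hilbert_Choice.inv p) A $$ (i,k)"
      using i k by (simp add: pm_def)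
  qed (use Pc A Ic in \<open>auto simp: pm_def\<close>)
qed

theorem proposition30:
  fixes A Q :: "real mat" and n :: nat and p :: "nat \<Rightarrow> nat"
  assumes "A \<in> carrier_mat n n"
    and "p permutes {..<n}"
    and "Q \<in> carrier_mat n n"
    and "perm_mat n p * Q = 1\<^sub>m n"
  shows "(TJS n A \<longrightarrow> TJS n (perm_mat n p * A * Q) \<and> TJS n (rev_mat n A)) \<and>
         (STJS n A \<longrightarrow> STJS n (perm_mat n p * A * Q) \<and> STJS n (rev_mat n A))"
proof -
  have b: "bij_betw (Hilbert_Choice.inv p) {..<n} {..<n}"
    using permutes_imp_bij[OF permutes_inv[OF assms(2)]] .
  note c = conj_pm[OF assms]
  show ?thesis unfolding c rev_pm using TJS_pm[OF b] STJS_pm[OF b] TJS_pm[OF rev_bij] STJS_pm[OF rev_bij]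
    by blast
qed

end
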